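(* Consider the problem $(P_1)$: $\min_{x\in Q}\{f(x):\mathbf{A}x=b\}$, and its dual function $\varphi$. Assume: (i) for some $\nu\in[0,1]$ the subgradients $\nabla\varphi(\lambda)=b-\mathbf{A}x(\lambda)$ used by the algorithm satisfy $\|\nabla\varphi(\lambda)-\nabla\varphi(\lambda')\|_2\le M_\nu\|\lambda-\lambda'\|_2^\nu$ for all $\lambda,\lambda'$, with $M_\nu<\infty$; (ii) the dual problem $\min_{\lambda}\varphi(\lambda)$ has a solution $\lambda^*$ with $\|\lambda^*\|_2\le R$ for some $R>0$; (iii) there is no duality gap: $\min_{x\in Q}\{f(x):\mathbf{A}x=b\}=-\varphi(\lambda^* )$. Let $\varepsilon>0$. Then for every $k\ge1$ the points $\hat x^k\in Q$, $\eta^k$ generated by Algorithm PDUGDsDR satisfy $$\|\mathbf{A}\hat x^k-b\|_2\le\frac{2R}{A_k}+\frac{\varepsilon}{2R},\qquad|\varphi(\eta^k)+f(\hat x^k)|\le\frac{2R^2}{A_k}+\frac\varepsilon2,$$ where $$A_k\ge c_\nu\,\frac{k^{\frac{1+3\nu}{1+\nu}}\varepsilon^{\frac{1-\nu}{1+\nu}}}{2^{\frac{1+3\nu}{1+\nu}}M_\nu^{\frac{2}{1+\nu}}},\qquad c_\nu=\left[\frac{1+\nu}{1-\nu}\right]^{\frac{1-\nu}{1+\nu}}\ (\nu<1),\ c_1=1.$$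
   Context: $E$ is a finite-dimensional real vector space, $Q\subseteq E$ is a closed convex set, $f:Q\to\mathbb{R}$ is convex, $H$ is a finite-dimensional real Euclidean space (identified with its dual $\Lambda=H^*$, with norm $\|\cdot\|_2$), $\mathbf{A}:E\to H$ is linear and $b\in H$. The dual objective (to be minimized) is $$\varphi(\lambda)=\langle\lambda,b\rangle+\max_{x\in Q}\big(-f(x)-\langle\mathbf{A}^T\lambda,x\rangle\big),\quad\lambda\in\Lambda,$$ where it is assumed that the maximum is attained for every $\lambda$; $x(\lambda)$ denotes a maximizer, and $b-\mathbf{A}x(\lambda)$ is then a subgradient of the convex function $\varphi$ at $\lambda$. Algorithm PDUGDsDR (input accuracy $\varepsilon>0$): set $A_0=0$, $\eta^0=\zeta^0=0$. For $k=0,1,2,\dots$: 1. $\beta_k\in\arg\min_{\beta\in[0,1]}\varphi(\zeta^k+\beta(\eta^k-\zeta^k))$, $\lambda^k=\zeta^k+\beta_k(\eta^k-\zeta^k)$. 2. Choose a maximizer $x(\lambda^k)$ such that $g^k:=\nabla\varphi(\lambda^k)=b-\mathbf{A}x(\lambda^k)$ satisfies $\langle g^k,\zeta^k-\lambda^k\rangle\ge0$ (such a choice exists). Let $h_{k+1}\in\arg\min_{h\ge0}\varphi(\lambda^k-hg^k)$ and $\eta^{k+1}=\lambda^k-h_{k+1}g^k$. 3. $a_{k+1}$ is the largest solution of $\varphi(\eta^{k+1})=\varphi(\lambda^k)-\frac{a_{k+1}^2}{2(A_k+a_{k+1})}\|g^k\|_2^2+\frac{\varepsilon a_{k+1}}{2(A_k+a_{k+1})}$;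 $A_{k+1}=A_k+a_{k+1}$. 4. $\zeta^{k+1}=\zeta^k-a_{k+1}g^k$. 5. $\hat x^{k+1}=\frac1{A_{k+1}}\sum_{i=0}^k a_{i+1}x(\lambda^i)$. All minima are assumed attained and $g^k\neq0$ for all iterations considered. *)

theory Defs
  imports "HOL-Analysis.Analysis"
begin

text \<open>Under the standing assumption that the maximum
  is attained, the supremum below is that maximum.\<close>
definition dual_obj :: "('e \<Rightarrow> real) \<Rightarrow> 'e set \<Rightarrow> ('e \<Rightarrow> 'h::real_inner) \<Rightarrow> 'h \<Rightarrow> 'h \<Rightarrow> real" where
  "dual_obj f Q A b lam = inner lam b + (SUP x\<in>Q. - f x - inner lam (A x))"

definition is_dual_maximizer :: "('e \<Rightarrow> real) \<Rightarrow> 'e set \<Rightarrow> ('e \<Rightarrow> 'h::real_inner) \<Rightarrow> 'h \<Rightarrow> 'e \<Rightarrow> bool" where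
  "is_dual_maximizer f Q A lam x \<longleftrightarrow>
     x \<in> Q \<and> (\<forall>y\<in>Q. - f y - inner lam (A y) \<le> - f x - inner lam (A x))"

text \<open>Power t^nu with the convention t^0 = 1 (also for t = 0).\<close>
definition hpow :: "real \<Rightarrow> real \<Rightarrow> real" where
  "hpow t nu = (if nu = 0 then 1 else t powr nu)"

definition c_nu :: "real \<Rightarrow> real" where
  "c_nu nu = (if nu < 1 then ((1 + nu) / (1 - nu)) powr ((1 - nu) / (1 + nu)) else 1)"

end

theory Submission
  imports Defs
begin


lemma powr_mvt:
  fixes s t e :: real
  assumes "0 \<le> s" "s < t" "0 < e"
  shows "\<exists>z. s < z \<and> z < t \<and> t powr e - s powr e = (t - s) * (e * z powr (e - 1))"
proof -
  have c: "continuous_on {s..t} (\<lambda>x. x powr e)"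
    by (rule continuous_on_powr') (use assms in \<open>auto intro: continuous_intros\<close>)
  have d: "(\<lambda>x. x powr e) differentiable (at x)" if "s < x" "x < t" for x
    using has_real_derivative_powr[of x e] that assms real_differentiable_def by force
  obtain l z where lz: "s < z" "z < t" "DERIV (\<lambda>x. x powr e) z :> l" "t powr e - s powr e = (t - s) * l"
    using MVT[OF assms(2) c d] by blast
  have "l = e * z powr (e - 1)"
    using DERIV_unique[OF lz(3) has_real_derivative_powr[of z e]] lz assms by auto
  with lz show ?thesis by blast
qed

lemma convex_pow_ineq:
  fixes s t nu :: real
  assumes "0 \<le> s" "s \<le> t" "0 \<le> nu"
  shows "(1 + nu) * (t - s) * s powr nu \<le> t powr (1 + nu) - s powr (1 + nu)"
proof (cases "s = t")
  case False
  then have "s < t" using assms by auto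
  then obtain z where z: "s < z" "z < t" "t powr (1+nu) - s powr (1+nu) = (t - s) * ((1+nu) * z powr nu)"
    using powr_mvt[of s t "1+nu"] assms by auto
  have "s powr nu \<le> z powr nu" using z assms by (intro powr_mono2) auto
  then show ?thesis using z assms
    by (simp add: mult_left_mono mult.assoc)
qed simp

lemma concave_pow_ineq:
  fixes s t g :: real
  assumes "0 \<le> s" "s \<le> t" "0 < g" "g \<le> 1" "0 < t"
  shows "g * t powr (g - 1) * (t - s) \<le> t powr g - s powr g"
proof (cases "s = t")
  case False
  then have "s < t" using assms by auto
  then obtain z where z: "s < z" "z < t" "t powr g - s powr g = (t - s) * (g * z powr (g - 1))"
    using powr_mvt[of s t g] assms by auto
  have "t powr (g - 1) \<le> z powr (g - 1)" using z assms by (intro powr_mono2') auto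
  then have "g * t powr (g - 1) \<le> g * z powr (g - 1)" using assms by simp
  then show ?thesis using z assms
    by (metis diff_ge_0_iff_ge mult.commute mult_right_mono)
qed simp

lemma young_step:
  fixes nu M d w r :: real
  assumes nu: "0 \<le> nu" "nu \<le> 1" and M: "0 < M" and d: "0 < d" and w: "0 < w" and r: "0 < r"
    and wle: "w \<le> c_nu nu * d powr ((1 - nu) / (1 + nu)) / M powr (2 / (1 + nu))"
  shows "M / (1 + nu) * r powr (1 + nu) \<le> r\<^sup>2 / (2 * w) + d / 2"
proof (cases "nu = 1")
  case True
  then have "w \<le> 1 / M" using wle d M by (simp add: c_nu_def)
  then have "M \<le> 1 / w" using M w by (simp add: field_simps)
  then have "M * r\<^sup>2 \<le> r\<^sup>2 / w" using r by (simp add: mult_right_mono divide_inverse)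
  then show ?thesis using True d r by (simp add: powr_numeral field_simps)
next
  case False
  then have nu1: "nu < 1" using nu by auto
  define al where "al = (1 + nu) / 2"
  define be where "be = (1 - nu) / 2"
  define X where "X = r\<^sup>2 / ((1 + nu) * w)"
  define Y where "Y = d / (1 - nu)"
  have X: "X > 0" using r w nu by (simp add: X_def)
  have Y: "Y > 0" using d nu1 by (simp add: Y_def)
  have young: "X powr al * Y powr be \<le> al * X + be * Y"
    by (rule Youngs_inequality_0) (use nu nu1 X Y in \<open>auto simp: al_def be_def field_simps\<close>)
  have rhs: "al * X + be * Y = r\<^sup>2 / (2 * w) + d / 2"
  proof -
    have "al * X = r\<^sup>2 / (2 * w)" using nu w by (simp add: al_def X_def)
    moreover have "be * Y = d / 2" using nu1 by (simp add: be_def Y_def field_simps)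
    ultimately show ?thesis by simp
  qed
  have c: "c_nu nu = ((1 + nu) / (1 - nu)) powr ((1 - nu) / (1 + nu))"
    using nu1 by (simp add: c_nu_def)
  have wa: "w powr al \<le> (c_nu nu * d powr ((1 - nu) / (1 + nu)) / M powr (2 / (1 + nu))) powr al"
    using wle w nu by (intro powr_mono2) (auto simp: al_def)
  also have "\<dots> = (1 + nu) powr be * Y powr be / M"
  proof -
    have "(c_nu nu * d powr ((1 - nu) / (1 + nu)) / M powr (2 / (1 + nu))) powr al
        = c_nu nu powr al * (d powr ((1 - nu) / (1 + nu))) powr al / (M powr (2 / (1 + nu))) powr al"
      using M d nu1 by (simp add: c powr_divide powr_mult)
    also have "\<dots> = ((1 + nu) / (1 - nu)) powr be * d powr be / M"
    proof -
      have e1: "(1 - nu) * al / (1 + nu) = be" using nu by (simp add: al_def be_def field_simps)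
      have e2: "2 * al / (1 + nu) = 1" using nu by (simp add: al_def field_simps)
      show ?thesis using M d nu1 by (simp add: c powr_powr e1 e2)
    qed
    also have "\<dots> = (1 + nu) powr be * Y powr be / M"
      using nu nu1 d by (simp add: Y_def powr_divide)
    finally show ?thesis .
  qed
  finally have wa: "w powr al \<le> (1 + nu) powr be * Y powr be / M" .
  have "((1 + nu) * w) powr al = (1 + nu) powr al * w powr al"
    using nu w by (simp add: powr_mult)
  also have "\<dots> \<le> (1 + nu) powr al * ((1 + nu) powr be * Y powr be / M)"
    using wa nu by (intro mult_left_mono) auto
  also have "\<dots> = (1 + nu) * Y powr be / M"
  proof -
    have "al + be = 1" by (simp add: al_def be_def field_simps)
    then have "(1 + nu) powr al * (1 + nu) powr be = 1 + nu"
      using nu by (simp add: powr_add[symmetric])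
    then show ?thesis by (metis (no_types, lifting) mult.assoc times_divide_eq_right)
  qed
  finally have key: "((1 + nu) * w) powr al \<le> (1 + nu) * Y powr be / M" .
  have Xa: "X powr al = r powr (1 + nu) / ((1 + nu) * w) powr al"
  proof -
    have "(2 + 2 * nu) / 2 = 1 + nu" by simp
    then have h2: "r powr ((2 + 2 * nu) / 2) = r powr (1 + nu)" by metis
    show ?thesis
      using r w nu h2 by (simp add: X_def powr_divide al_def powr_powr flip: powr_numeral)
  qed
  have pos: "((1 + nu) * w) powr al > 0" using nu w by simp
  have "M / (1 + nu) * r powr (1 + nu) = r powr (1 + nu) * (M / (1 + nu))" by simp
  also have "\<dots> \<le> r powr (1 + nu) * (Y powr be / ((1 + nu) * w) powr al)"
  proof (rule mult_left_mono)
    show "M / (1 + nu) \<le> Y powr be / ((1 + nu) * w) powr al"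
      using key pos M nu by (simp add: field_simps)
  qed simp
  also have "\<dots> = X powr al * Y powr be" by (simp add: Xa)
  finally show ?thesis using young rhs by linarith
qed



lemma phi_eq:
  assumes "is_dual_maximizer f Q A l x"
  shows "dual_obj f Q A b l = inner l b - f x - inner l (A x)"
proof -
  have "(SUP y\<in>Q. - f y - inner l (A y)) = - f x - inner l (A x)"
    using assms unfolding is_dual_maximizer_def by (intro cSup_eq_maximum) auto
  then show ?thesis by (simp add: dual_obj_def)
qed

lemma phi_lower:
  assumes "is_dual_maximizer f Q A l x" "y \<in> Q"
  shows "inner l b - f y - inner l (A y) \<le> dual_obj f Q A b l"
  using assms phi_eq[OF assms(1), of b] unfolding is_dual_maximizer_def by force

lemma phi_subgrad:
  assumes "is_dual_maximizer f Q A l x" "is_dual_maximizer f Q A l' x'"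
  shows "dual_obj f Q A b l + inner (b - A x) (l' - l) \<le> dual_obj f Q A b l'"
proof -
  have xQ: "x \<in> Q" using assms(1) by (simp add: is_dual_maximizer_def)
  have "inner l' b - f x - inner l' (A x) \<le> dual_obj f Q A b l'"
    by (rule phi_lower[OF assms(2) xQ])
  moreover have "dual_obj f Q A b l + inner (b - A x) (l' - l) = inner l' b - f x - inner l' (A x)"
    using phi_eq[OF assms(1), of b] by (simp add: inner_diff_left inner_diff_right inner_commute)
  ultimately show ?thesis by simp
qed



lemma le_of_all_inv:
  fixes x y C :: real
  assumes "\<And>n::nat. n > 0 \<Longrightarrow> x \<le> y + C / n"
  shows "x \<le> y"
proof (rule ccontr)
  assume "\<not> x \<le> y"
  then have pos: "x - y > 0" by simp
  obtain n :: nat where n: "n > \<bar>C\<bar> / (x - y)" using reals_Archimedean2 by blast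
  then have n0: "n > 0" using pos
    by (metis abs_ge_zero divide_nonneg_pos gr0I less_le_not_le of_nat_0)
  have "\<bar>C\<bar> < n * (x - y)" using n pos by (simp add: field_simps)
  then have "C / n < x - y" using n0 by (simp add: field_simps)
  moreover have "x \<le> y + C / n" using assms[of n] n0 by simp
  ultimately show False by simp
qed

lemma descent:
  fixes f :: "'e \<Rightarrow> real" and A :: "'e \<Rightarrow> 'h::real_inner" and Q :: "'e set" and b :: 'h
  defines "phi \<equiv> dual_obj f Q A b"
  assumes max_attained: "\<And>l. \<exists>x. is_dual_maximizer f Q A l x"
    and nu: "0 \<le> nu" "nu \<le> 1" and M: "0 \<le> M"
    and holder: "\<And>l l' x x'. is_dual_maximizer f Q A l x \<Longrightarrow> is_dual_maximizer f Q A l' x' \<Longrightarrow>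
        norm ((b - A x) - (b - A x')) \<le> M * hpow (norm (l - l')) nu"
    and mx: "is_dual_maximizer f Q A l x"
  shows "phi (l + d) \<le> phi l + inner (b - A x) d + M / (1 + nu) * norm d powr (1 + nu)"
proof (cases "d = 0")
  case True then show ?thesis by simp
next
  case dne: False
  define X where "X t = (SOME y. is_dual_maximizer f Q A (l + t *\<^sub>R d) y)" for t :: real
  have mX: "is_dual_maximizer f Q A (l + t *\<^sub>R d) (X t)" for t
    unfolding X_def by (rule someI_ex[OF max_attained])
  define g where "g = b - A x"
  define D where "D = norm d powr (1 + nu)"
  have nd: "norm d > 0" using dne by simp
  have key0: "phi (l + t *\<^sub>R d) - phi (l + s *\<^sub>R d) \<le> (t - s) * inner (b - A (X t)) d" for s t
  proof -
    have "phi (l + t *\<^sub>R d) + inner (b - A (X t)) ((l + s *\<^sub>R d) - (l + t *\<^sub>R d)) \<le> phi (l + s *\<^sub>R d)"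
      unfolding phi_def by (rule phi_subgrad[OF mX mX])
    moreover have "(l + s *\<^sub>R d) - (l + t *\<^sub>R d) = (s - t) *\<^sub>R d" by (simp add: algebra_simps)
    ultimately show ?thesis by (simp add: algebra_simps)
  qed
  have gt: "inner (b - A (X t)) d \<le> inner g d + norm ((b - A (X t)) - g) * norm d" for t
  proof -
    have "inner (b - A (X t)) d = inner g d + inner ((b - A (X t)) - g) d" by (simp add: inner_diff_left)
    also have "\<dots> \<le> inner g d + norm ((b - A (X t)) - g) * norm d"
      using norm_cauchy_schwarz by simp
    finally show ?thesis .
  qed
  show ?thesis
  proof (cases "nu = 0")
    case True
    have "norm ((b - A (X 1)) - g) \<le> M"
      using holder[OF mX[of 1] mx] True by (simp add: g_def hpow_def)
    then have "norm ((b - A (X 1)) - g) * norm d \<le> M * norm d" by (simp add: mult_right_mono)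
    then have "phi (l + d) - phi l \<le> inner g d + M * norm d"
      using key0[of 1 0] gt[of 1] by simp
    then show ?thesis using True nd by (simp add: g_def)
  next
    case False
    then have nupos: "nu > 0" using nu by simp
    have key1: "phi (l + t *\<^sub>R d) - phi (l + s *\<^sub>R d) \<le> (t - s) * (inner g d + M * t powr nu * D)"
      if st: "0 \<le> s" "s \<le> t" for s t
    proof -
      have "norm ((b - A (X t)) - g) \<le> M * hpow (norm ((l + t *\<^sub>R d) - l)) nu"
        using holder[OF mX[of t] mx] by (simp add: g_def)
      also have "\<dots> = M * (t powr nu * norm d powr nu)"
        using nupos st by (simp add: hpow_def powr_mult)
      finally have "norm ((b - A (X t)) - g) * norm d \<le> M * (t powr nu * norm d powr nu) * norm d"
        by (simp add: mult_right_mono)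
      also have "\<dots> = M * t powr nu * D"
        using nd by (simp add: D_def powr_add mult.assoc)
      finally have "inner (b - A (X t)) d \<le> inner g d + M * t powr nu * D" using gt[of t] by simp
      then have "(t - s) * inner (b - A (X t)) d \<le> (t - s) * (inner g d + M * t powr nu * D)"
        using st by (simp add: mult_left_mono)
      then show ?thesis using key0[of t s] by simp
    qed
    define h where "h t = phi (l + t *\<^sub>R d) - t * inner g d - M * D * t powr (1 + nu) / (1 + nu)" for t
    have D0: "D \<ge> 0" by (simp add: D_def)
    have key2: "h t - h s \<le> M * D * ((t - s) * (t powr nu - s powr nu))" if st: "0 \<le> s" "s \<le> t" for s t
    proof -
      have c: "(1 + nu) * (t - s) * s powr nu \<le> t powr (1 + nu) - s powr (1 + nu)"
        by (rule convex_pow_ineq) (use st nu in auto)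
      have "M * D / (1 + nu) * ((1 + nu) * (t - s) * s powr nu) \<le> M * D / (1 + nu) * (t powr (1 + nu) - s powr (1 + nu))"
        using c M D0 nu by (intro mult_left_mono) auto
      moreover have "M * D / (1 + nu) * ((1 + nu) * (t - s) * s powr nu) = M * D * ((t - s) * s powr nu)"
        using nu by (simp add: field_simps)
      moreover have "M * D / (1 + nu) * (t powr (1 + nu) - s powr (1 + nu)) = M * D * t powr (1 + nu) / (1 + nu) - M * D * s powr (1 + nu) / (1 + nu)"
        by (simp add: right_diff_distrib)
      ultimately have c2: "M * D * ((t - s) * s powr nu) \<le> M * D * t powr (1 + nu) / (1 + nu) - M * D * s powr (1 + nu) / (1 + nu)"
        by simp
      have "h t - h s = (phi (l + t *\<^sub>R d) - phi (l + s *\<^sub>R d)) - (t - s) * inner g d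
          - (M * D * t powr (1 + nu) / (1 + nu) - M * D * s powr (1 + nu) / (1 + nu))"
        by (simp add: h_def algebra_simps)
      also have "\<dots> \<le> (t - s) * (M * t powr nu * D) - M * D * ((t - s) * s powr nu)"
        using key1[OF st] c2 by (simp add: algebra_simps)
      also have "\<dots> = M * D * ((t - s) * (t powr nu - s powr nu))" by (simp add: algebra_simps)
      finally show ?thesis .
    qed
    have key3: "h 1 \<le> h 0 + M * D / n" if n: "n > 0" for n :: nat
    proof -
      have "h 1 - h 0 = (\<Sum>j<n. h (real (Suc j) / n) - h (real j / n))"
        using sum_lessThan_telescope[of "\<lambda>j. h (real j / n)" n] n by simp
      also have "\<dots> \<le> (\<Sum>j<n. M * D * ((real (Suc j) / n - real j / n) * ((real (Suc j) / n) powr nu - (real j / n) powr nu)))"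
        by (intro sum_mono key2) (auto simp: divide_right_mono)
      also have "\<dots> = M * D / n * (\<Sum>j<n. (real (Suc j) / n) powr nu - (real j / n) powr nu)"
        using n by (simp add: sum_distrib_left diff_divide_distrib[symmetric] mult.assoc)
      also have "(\<Sum>j<n. (real (Suc j) / n) powr nu - (real j / n) powr nu) = 1"
        using sum_lessThan_telescope[of "\<lambda>j. (real j / n) powr nu" n] n nupos by simp
      finally show ?thesis by simp
    qed
    have "h 1 \<le> h 0" by (rule le_of_all_inv, rule key3) simp
    then show ?thesis using nupos by (simp add: h_def g_def D_def)
  qed
qed



lemma root_ge:
  fixes A0 G eps PL PE t a :: real
  assumes A0: "A0 \<ge> 0" and G: "G > 0" and eps: "eps > 0" and t: "t > 0"
    and le: "PE \<le> PL - t\<^sup>2 / (2 * (A0 + t)) * G + eps * t / (2 * (A0 + t))"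
    and largest: "\<And>x. A0 + x \<noteq> 0 \<Longrightarrow> PE = PL - x\<^sup>2 / (2 * (A0 + x)) * G + eps * x / (2 * (A0 + x)) \<Longrightarrow> x \<le> a"
  shows "t \<le> a"
proof -
  define psi where "psi x = PL - x\<^sup>2 / (2 * (A0 + x)) * G + eps * x / (2 * (A0 + x))" for x
  define B where "B = max t (max A0 (4 * (PL - PE + eps / 2) / G)) + 1"
  have B: "B \<ge> t" "B \<ge> A0" "B \<ge> 4 * (PL - PE + eps / 2) / G" "B > 0"
    using t unfolding B_def by auto
  have AB: "A0 + B > 0" using A0 B by simp
  have "B / 4 \<le> B\<^sup>2 / (2 * (A0 + B))"
    using B AB by (simp add: field_simps power2_eq_square)
  then have "B / 4 * G \<le> B\<^sup>2 / (2 * (A0 + B)) * G" using G by (intro mult_right_mono) auto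
  then have i1: "B * G / 4 \<le> B\<^sup>2 / (2 * (A0 + B)) * G" by simp
  have i2: "eps * B / (2 * (A0 + B)) \<le> eps / 2"
    using B AB eps A0 by (simp add: field_simps)
  have "4 * (PL - PE + eps / 2) \<le> B * G" using B(3) G by (simp add: field_simps)
  then have "PL - PE + eps / 2 \<le> B * G / 4" by simp
  then have "psi B \<le> PE" using i1 i2 unfolding psi_def by linarith
  moreover have "PE \<le> psi t" using le by (simp add: psi_def)
  moreover have "\<forall>x. t \<le> x \<and> x \<le> B \<longrightarrow> isCont psi x"
  proof (intro allI impI)
    fix x assume "t \<le> x \<and> x \<le> B"
    then have "A0 + x \<noteq> 0" using t A0 by auto
    then show "isCont psi x" unfolding psi_def by (intro continuous_intros) auto
  qed
  ultimately obtain x where x: "t \<le> x" "x \<le> B" "psi x = PE"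
    using IVT2[of psi B PE t] B by blast
  have "A0 + x \<noteq> 0" using x t A0 by auto
  then have "x \<le> a" using largest x(3) unfolding psi_def by auto
  then show ?thesis using x by simp
qed

lemma growth_step:
  fixes nu M eps A0 a :: real
  assumes nu: "0 \<le> nu" "nu \<le> 1" and M: "M > 0" and eps: "eps > 0" and A0: "A0 \<ge> 0"
    and P: "\<And>t. t > 0 \<Longrightarrow> t\<^sup>2 / (A0 + t) \<le> c_nu nu * (eps * t / (A0 + t)) powr ((1 - nu) / (1 + nu)) / M powr (2 / (1 + nu)) \<Longrightarrow> t \<le> a"
  shows "a > 0 \<and> (A0 + a) powr ((1 + nu) / (1 + 3 * nu)) \<ge> A0 powr ((1 + nu) / (1 + 3 * nu))
            + (1 + nu) / (1 + 3 * nu) * (c_nu nu * eps powr ((1 - nu) / (1 + nu)) / M powr (2 / (1 + nu))) powr ((1 + nu) / (1 + 3 * nu))"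
proof -
  define p where "p = (1 - nu) / (1 + nu)"
  define q where "q = 2 / (1 + nu)"
  define gm where "gm = (1 + nu) / (1 + 3 * nu)"
  define K where "K = c_nu nu * eps powr p / M powr q"
  have c: "c_nu nu > 0" using nu by (auto simp: c_nu_def)
  have K: "K > 0" using c eps M by (simp add: K_def)
  have gm: "0 < gm" "gm \<le> 1" using nu by (auto simp: gm_def)
  have p: "0 \<le> p" "p \<le> 1" using nu by (auto simp: p_def)
  have d1: "1 + nu > 0" "1 + 3 * nu > 0" using nu by auto
  have igm: "1 / gm = 2 - p" using d1 by (simp add: gm_def p_def field_simps)
  have igm2: "(1 - gm) / gm = 1 - p"
  proof -
    have "(1 - gm) / gm = 1 / gm - 1" using gm by (simp add: diff_divide_distrib)
    then show ?thesis using igm by simp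
  qed
  define Z where "Z = A0 powr gm + gm * K powr gm"
  have Z: "Z > 0" using K gm by (simp add: Z_def add_nonneg_pos)
  define S where "S = Z powr (1 / gm)"
  have S0: "S > 0" using Z by (simp add: S_def)
  have SZ: "S powr gm = Z" using Z gm by (simp add: S_def powr_powr)
  have SA: "S > A0"
  proof (rule ccontr)
    assume "\<not> S > A0"
    then have "S powr gm \<le> A0 powr gm" using S0 gm by (intro powr_mono2) auto
    moreover have "gm * K powr gm > 0" using K gm by simp
    ultimately show False using SZ by (simp add: Z_def)
  qed
  define t where "t = S - A0"
  have t: "t > 0" using SA by (simp add: t_def)
  have "gm * S powr (gm - 1) * (S - A0) \<le> S powr gm - A0 powr gm"
    by (rule concave_pow_ineq) (use A0 SA gm S0 in auto)
  then have "gm * (S powr (gm - 1) * t) \<le> gm * K powr gm" using SZ by (simp add: Z_def t_def mult.assoc)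
  then have "S powr (gm - 1) * t \<le> K powr gm" using gm by simp
  then have "S powr (1 - gm) * (S powr (gm - 1) * t) \<le> S powr (1 - gm) * K powr gm"
    by (intro mult_left_mono) auto
  moreover have "S powr (1 - gm) * (S powr (gm - 1) * t) = t"
    using S0 by (simp add: mult.assoc[symmetric] powr_add[symmetric])
  ultimately have tle: "t \<le> K powr gm * S powr (1 - gm)" by (metis mult.commute)
  have "t powr (1 / gm) \<le> (K powr gm * S powr (1 - gm)) powr (1 / gm)"
    using tle t gm by (intro powr_mono2) auto
  also have "\<dots> = K * S powr (1 - p)"
    using K S0 gm by (simp add: powr_mult powr_powr igm2[symmetric])
  finally have t2: "t powr (2 - p) \<le> K * S powr (1 - p)" by (simp add: igm)
  have "t\<^sup>2 / S = t powr (2 - p) * t powr p / S"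
    using t by (simp add: powr_add[symmetric] flip: powr_numeral)
  also have "\<dots> \<le> K * S powr (1 - p) * t powr p / S"
    using t2 S0 by (intro divide_right_mono mult_right_mono) auto
  also have "\<dots> = K * (t / S) powr p"
    using S0 t by (simp add: powr_divide powr_diff field_simps)
  also have "\<dots> = c_nu nu * (eps * t / S) powr p / M powr q"
    using eps t S0 by (simp add: K_def powr_mult powr_divide mult.commute mult.left_commute)
  finally have "t\<^sup>2 / (A0 + t) \<le> c_nu nu * (eps * t / (A0 + t)) powr p / M powr q"
    by (simp add: t_def)
  then have ta: "t \<le> a" using P[OF t] by (simp add: p_def q_def)
  then have "A0 + a \<ge> S" by (simp add: t_def)
  then have "(A0 + a) powr gm \<ge> S powr gm" using S0 gm by (intro powr_mono2) auto
  then show ?thesis using ta t SZ by (simp add: Z_def gm_def K_def p_def q_def)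
qed

lemma final_bound:
  fixes nu M eps Ak :: real and k :: nat
  assumes nu: "0 \<le> nu" "nu \<le> 1" and M: "M > 0" and eps: "eps > 0" and Ak: "Ak \<ge> 0"
    and ind: "Ak powr ((1 + nu) / (1 + 3 * nu)) \<ge> real k * ((1 + nu) / (1 + 3 * nu) *
          (c_nu nu * eps powr ((1 - nu) / (1 + nu)) / M powr (2 / (1 + nu))) powr ((1 + nu) / (1 + 3 * nu)))"
  shows "Ak \<ge> c_nu nu * (real k powr ((1 + 3 * nu) / (1 + nu)) * eps powr ((1 - nu) / (1 + nu)))
                 / (2 powr ((1 + 3 * nu) / (1 + nu)) * M powr (2 / (1 + nu)))"
proof -
  define s where "s = (1 + 3 * nu) / (1 + nu)"
  define gm where "gm = (1 + nu) / (1 + 3 * nu)"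
  define K where "K = c_nu nu * eps powr ((1 - nu) / (1 + nu)) / M powr (2 / (1 + nu))"
  have c: "c_nu nu > 0" using nu by (auto simp: c_nu_def)
  have K: "K > 0" using c eps M by (simp add: K_def)
  have gm: "0 < gm" "gm \<ge> 1/2" using nu by (auto simp: gm_def field_simps)
  have s: "s > 0" using nu by (simp add: s_def)
  have gs: "gm * s = 1" using nu by (simp add: gm_def s_def)
  have "Ak = (Ak powr gm) powr s" using Ak gs by (simp add: powr_powr)
  also have "\<dots> \<ge> (real k * (gm * K powr gm)) powr s"
  proof (rule powr_mono2)
    show "0 \<le> real k * (gm * K powr gm)" using gm K by simp
    show "real k * (gm * K powr gm) \<le> Ak powr gm" using ind by (simp add: gm_def K_def)
  qed (use s in auto)
  finally have "Ak \<ge> (real k * gm) powr s * K"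
    using K gm gs by (simp add: powr_mult powr_powr mult.assoc)
  moreover have "(real k * gm) powr s \<ge> (real k / 2) powr s"
  proof (rule powr_mono2)
    have "real k * 1 \<le> real k * (2 * gm)" using gm by (intro mult_left_mono) auto
    then show "real k / 2 \<le> real k * gm" by simp
  qed (use s gm in auto)
  ultimately have "Ak \<ge> (real k / 2) powr s * K"
    using K by (meson mult_right_mono less_imp_le order_trans)
  also have "(real k / 2) powr s * K = c_nu nu * (real k powr s * eps powr ((1 - nu) / (1 + nu)))
                 / (2 powr s * M powr (2 / (1 + nu)))"
    by (simp add: K_def powr_divide)
  finally show ?thesis by (simp add: s_def)
qed

lemma gen1: fixes X S PL a G e N' N I A0 :: real
  shows "X = S*PL - a\<^sup>2*G/2 + e*a/2 \<Longrightarrow> N' = N + 2*a*I + a\<^sup>2*G \<Longrightarrow> S = A0 + a \<Longrightarrow> X - e*S/2 + N'/2 = S*PL - e*A0/2 + N/2 + a*I"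
  by (simp add: field_simps)
lemma gen2: fixes A0 PE PL a W J I e N :: real
  shows "A0*(PE-PL) \<ge> 0 \<Longrightarrow> a*W \<ge> 0 \<Longrightarrow> J - I = W \<Longrightarrow> (A0+a)*PL - e*A0/2 + N/2 + a*I \<le> A0*PE - e*A0/2 + N/2 + a*(PL+J)"
proof -
  assume h: "A0*(PE-PL) \<ge> 0" "a*W \<ge> 0" "J - I = W"
  then have "a*J - a*I = a*W" by (simp add: right_diff_distrib[symmetric])
  then show ?thesis using h by (simp add: algebra_simps)
qed



theorem mainTheorem13:
  fixes Q :: "'e::euclidean_space set"
    and f :: "'e \<Rightarrow> real"
    and A :: "'e \<Rightarrow> 'h::euclidean_space"
    and b :: 'h
    and nu M R eps :: real
    and lamstar :: 'h
    and beta h a Acap :: "nat \<Rightarrow> real"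
    and lam eta zeta g :: "nat \<Rightarrow> 'h"
    and xs xhat :: "nat \<Rightarrow> 'e"
  defines "phi \<equiv> dual_obj f Q A b"
  assumes Q_closed: "closed Q" and Q_convex: "convex Q"
    and f_convex: "convex_on Q f"
    and A_linear: "linear A"
    and max_attained: "\<And>l. \<exists>x. is_dual_maximizer f Q A l x"
    \<comment> \<open>(i) Hoelder continuity of the subgradients b - A x(lam)\<close>
    and nu_range: "0 \<le> nu" "nu \<le> 1"
    and M_nonneg: "0 \<le> M"
    and holder: "\<And>l l' x x'. is_dual_maximizer f Q A l x \<Longrightarrow> is_dual_maximizer f Q A l' x' \<Longrightarrow>
        norm ((b - A x) - (b - A x')) \<le> M * hpow (norm (l - l')) nu"
    \<comment> \<open>(ii) dual solution bounded by R\<close>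
    and R_pos: "0 < R"
    and lamstar_opt: "\<And>l. phi lamstar \<le> phi l"
    and lamstar_bound: "norm lamstar \<le> R"
    \<comment> \<open>(iii) no duality gap\<close>
    and no_gap: "\<exists>x\<in>Q. A x = b \<and> (\<forall>y\<in>Q. A y = b \<longrightarrow> f x \<le> f y) \<and> f x = - phi lamstar"
    and eps_pos: "0 < eps"
    \<comment> \<open>Algorithm PDUGDsDR\<close>
    and init: "Acap 0 = 0" "eta 0 = 0" "zeta 0 = 0"
    and step1: "\<And>k. beta k \<in> {0..1} \<and>
        (\<forall>t\<in>{0..1}. phi (zeta k + beta k *\<^sub>R (eta k - zeta k)) \<le> phi (zeta k + t *\<^sub>R (eta k - zeta k)))"
    and step1_lam: "\<And>k. lam k = zeta k + beta k *\<^sub>R (eta k - zeta k)"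
    and step2_x: "\<And>k. is_dual_maximizer f Q A (lam k) (xs k)"
    and step2_g: "\<And>k. g k = b - A (xs k)"
    and step2_choice: "\<And>k. inner (g k) (zeta k - lam k) \<ge> 0"
    and g_nonzero: "\<And>k. g k \<noteq> 0"
    and step2_h: "\<And>k. h (Suc k) \<ge> 0 \<and>
        (\<forall>t\<ge>0. phi (lam k - h (Suc k) *\<^sub>R g k) \<le> phi (lam k - t *\<^sub>R g k))"
    and step2_eta: "\<And>k. eta (Suc k) = lam k - h (Suc k) *\<^sub>R g k"
    and step3: "\<And>k. Acap k + a (Suc k) \<noteq> 0 \<and>
        phi (eta (Suc k)) = phi (lam k) - (a (Suc k))\<^sup>2 / (2 * (Acap k + a (Suc k))) * (norm (g k))\<^sup>2
                            + eps * a (Suc k) / (2 * (Acap k + a (Suc k)))"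
    and step3_largest: "\<And>k t. Acap k + t \<noteq> 0 \<Longrightarrow>
        phi (eta (Suc k)) = phi (lam k) - t\<^sup>2 / (2 * (Acap k + t)) * (norm (g k))\<^sup>2
                            + eps * t / (2 * (Acap k + t)) \<Longrightarrow> t \<le> a (Suc k)"
    and step3_A: "\<And>k. Acap (Suc k) = Acap k + a (Suc k)"
    and step4: "\<And>k. zeta (Suc k) = zeta k - a (Suc k) *\<^sub>R g k"
    and step5: "\<And>k. xhat (Suc k) = (1 / Acap (Suc k)) *\<^sub>R (\<Sum>i\<le>k. a (Suc i) *\<^sub>R xs i)"
  shows "\<forall>k\<ge>1. xhat k \<in> Q
      \<and> norm (A (xhat k) - b) \<le> 2 * R / Acap k + eps / (2 * R)
      \<and> \<bar>phi (eta k) + f (xhat k)\<bar> \<le> 2 * R\<^sup>2 / Acap k + eps / 2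
      \<and> Acap k \<ge> c_nu nu * (real k powr ((1 + 3 * nu) / (1 + nu)) * eps powr ((1 - nu) / (1 + nu)))
                 / (2 powr ((1 + 3 * nu) / (1 + nu)) * M powr (2 / (1 + nu)))"
proof -
  have phiE: "phi l = inner l b - f x - inner l (A x)" if "is_dual_maximizer f Q A l x" for l x
    unfolding phi_def by (rule phi_eq[OF that])
  have phiL: "inner l b - f y - inner l (A y) \<le> phi l" if "is_dual_maximizer f Q A l x" "y \<in> Q" for l x y
    unfolding phi_def by (rule phi_lower[OF that])
  have desc: "phi (l + d) \<le> phi l + inner (b - A x) d + M / (1 + nu) * norm d powr (1 + nu)"
    if "is_dual_maximizer f Q A l x" for l x d
    unfolding phi_def by (rule descent[OF max_attained nu_range M_nonneg holder that])
  have gpos: "(norm (g k))\<^sup>2 > 0" for k using g_nonzero[of k] by simp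
  have xsQ: "xs k \<in> Q" for k using step2_x[of k] by (simp add: is_dual_maximizer_def)
  have Mpos: "M > 0"
  proof (rule ccontr)
    assume "\<not> M > 0"
    then have M0: "M = 0" using M_nonneg by simp
    define G where "G = (norm (g 0))\<^sup>2"
    have G: "G > 0" using gpos by (simp add: G_def)
    define t where "t = (phi (lam 0) - phi lamstar + 1) / G"
    have "phi (lam 0 + (- (t *\<^sub>R g 0))) \<le> phi (lam 0) + inner (b - A (xs 0)) (- (t *\<^sub>R g 0)) + 0"
      using desc[OF step2_x[of 0], of "- (t *\<^sub>R g 0)"] M0 by simp
    also have "inner (b - A (xs 0)) (- (t *\<^sub>R g 0)) = - t * G"
      using step2_g[of 0] by (simp add: G_def power2_norm_eq_inner)
    finally have h1: "phi (lam 0 + (- (t *\<^sub>R g 0))) \<le> phi (lam 0) + - t * G" by simp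
    have h2: "t * G = phi (lam 0) - phi lamstar + 1" using G by (simp add: t_def)
    have "phi (lam 0 + (- (t *\<^sub>R g 0))) < phi lamstar" using h1 h2 by simp
    then show False using lamstar_opt by (meson not_le)
  qed
  have stepP: "t \<le> a (Suc k)"
    if Ak: "Acap k \<ge> 0" and t: "t > 0"
      and tle: "t\<^sup>2 / (Acap k + t) \<le> c_nu nu * (eps * t / (Acap k + t)) powr ((1 - nu) / (1 + nu)) / M powr (2 / (1 + nu))"
    for k t
  proof -
    define S where "S = Acap k + t"
    have S: "S > 0" using Ak t by (simp add: S_def)
    define w where "w = t\<^sup>2 / S"
    have w: "w > 0" using S t by (simp add: w_def)
    define dl where "dl = eps * t / S"
    have dl: "dl > 0" using S t eps_pos by (simp add: dl_def)
    define G where "G = (norm (g k))\<^sup>2"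
    define r where "r = w * norm (g k)"
    have r: "r > 0" using w g_nonzero[of k] by (simp add: r_def)
    have "phi (eta (Suc k)) \<le> phi (lam k - w *\<^sub>R g k)"
      using step2_h[of k] w by (simp add: step2_eta)
    also have "\<dots> = phi (lam k + (- (w *\<^sub>R g k)))" by simp
    also have "\<dots> \<le> phi (lam k) + inner (b - A (xs k)) (- (w *\<^sub>R g k)) + M / (1 + nu) * norm (- (w *\<^sub>R g k)) powr (1 + nu)"
      by (rule desc[OF step2_x])
    also have "inner (b - A (xs k)) (- (w *\<^sub>R g k)) = - w * G"
      using step2_g[of k] by (simp add: G_def power2_norm_eq_inner)
    also have "norm (- (w *\<^sub>R g k)) = r" using w by (simp add: r_def)
    also have "M / (1 + nu) * r powr (1 + nu) \<le> r\<^sup>2 / (2 * w) + dl / 2"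
      by (rule young_step[OF nu_range Mpos dl w r]) (use tle in \<open>simp add: w_def dl_def S_def\<close>)
    also have "r\<^sup>2 / (2 * w) = w * G / 2" using w by (simp add: r_def G_def power2_eq_square)
    finally have "phi (eta (Suc k)) \<le> phi (lam k) - w * G / 2 + dl / 2" by (simp add: algebra_simps)
    also have "\<dots> = phi (lam k) - t\<^sup>2 / (2 * (Acap k + t)) * G + eps * t / (2 * (Acap k + t))"
      by (simp add: w_def dl_def S_def mult.commute)
    finally have le: "phi (eta (Suc k)) \<le> phi (lam k) - t\<^sup>2 / (2 * (Acap k + t)) * G + eps * t / (2 * (Acap k + t))" .
    show ?thesis
      by (rule root_ge[OF Ak _ eps_pos t le]) (use gpos step3_largest in \<open>auto simp: G_def\<close>)
  qed
  define gm where "gm = (1 + nu) / (1 + 3 * nu)"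
  define K where "K = c_nu nu * eps powr ((1 - nu) / (1 + nu)) / M powr (2 / (1 + nu))"
  have grow: "a (Suc k) > 0 \<and> (Acap k + a (Suc k)) powr gm \<ge> Acap k powr gm + gm * K powr gm"
    if "Acap k \<ge> 0" for k
    unfolding gm_def K_def
    by (rule growth_step[OF nu_range Mpos eps_pos that]) (rule stepP[OF that], auto)
  have ind: "Acap k \<ge> 0 \<and> Acap k powr gm \<ge> real k * (gm * K powr gm)" for k
  proof (induction k)
    case 0 then show ?case using init by simp
  next
    case (Suc k)
    then have "a (Suc k) > 0" "(Acap k + a (Suc k)) powr gm \<ge> Acap k powr gm + gm * K powr gm"
      using grow by auto
    then show ?case using Suc step3_A[of k] by (simp add: algebra_simps)
  qed
  have Anonneg: "Acap k \<ge> 0" for k using ind by simp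
  have apos: "a (Suc k) > 0" for k using grow Anonneg by simp
  have Asum: "Acap k = (\<Sum>i<k. a (Suc i))" for k
    by (induction k) (simp_all add: init step3_A)
  have inv: "Acap k * phi (eta k) - eps * Acap k / 2 + (norm (l - zeta k))\<^sup>2 / 2
      \<le> (norm l)\<^sup>2 / 2 + (\<Sum>i<k. a (Suc i) * (phi (lam i) + inner (g i) (l - lam i)))" for k l
  proof (induction k)
    case 0 then show ?case using init by simp
  next
    case (Suc k)
    define Ak where "Ak = Acap k"
    define ak where "ak = a (Suc k)"
    define G where "G = (norm (g k))\<^sup>2"
    have nz: "Ak + ak \<noteq> 0" and e3: "phi (eta (Suc k)) = phi (lam k) - ak\<^sup>2 / (2 * (Ak + ak)) * G + eps * ak / (2 * (Ak + ak))"
      using step3[of k] by (simp_all add: Ak_def ak_def G_def)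
    have e3': "(Ak + ak) * phi (eta (Suc k)) = (Ak + ak) * phi (lam k) - ak\<^sup>2 * G / 2 + eps * ak / 2"
    proof -
      have gen1: "S * (u / (2 * S) * G) = u * G / 2" if "S \<noteq> 0" for S u :: real
        using that by (simp add: field_simps)
      have gen2: "S * (u / (2 * S)) = u / 2" if "S \<noteq> 0" for S u :: real
        using that by (simp add: field_simps)
      have q1: "(Ak + ak) * (ak\<^sup>2 / (2 * (Ak + ak)) * G) = ak\<^sup>2 * G / 2" by (rule gen1[OF nz])
      have q2: "(Ak + ak) * (eps * ak / (2 * (Ak + ak))) = eps * ak / 2" by (rule gen2[OF nz])
      show ?thesis unfolding e3 q1[symmetric] q2[symmetric] by (simp only: right_diff_distrib distrib_left)
    qed
    have nrm: "(norm (l - zeta (Suc k)))\<^sup>2 = (norm (l - zeta k))\<^sup>2 + 2 * ak * inner (g k) (l - zeta k) + ak\<^sup>2 * G"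
    proof -
      have eq: "l - zeta (Suc k) = (l - zeta k) + ak *\<^sub>R g k" by (simp add: step4 ak_def)
      have gen: "(norm (v + c *\<^sub>R u))\<^sup>2 = (norm v)\<^sup>2 + 2 * c * inner u v + c\<^sup>2 * (norm u)\<^sup>2"
        for v u :: 'h and c :: real
        by (simp only: power2_norm_eq_inner) (simp add: inner_add_left inner_add_right inner_commute
            algebra_simps power2_eq_square)
      show ?thesis unfolding G_def eq by (rule gen)
    qed
    have m1: "Ak * (phi (eta k) - phi (lam k)) \<ge> 0"
    proof -
      have "phi (zeta k + beta k *\<^sub>R (eta k - zeta k)) \<le> phi (zeta k + 1 *\<^sub>R (eta k - zeta k))"
      proof -
        have "\<forall>t\<in>{0..1}. phi (zeta k + beta k *\<^sub>R (eta k - zeta k)) \<le> phi (zeta k + t *\<^sub>R (eta k - zeta k))"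
          using step1[of k] by blast
        then show ?thesis by (meson atLeastAtMost_iff order_refl zero_le_one)
      qed
      then have "phi (lam k) \<le> phi (eta k)" by (simp add: step1_lam)
      then show ?thesis using Anonneg by (simp add: Ak_def)
    qed
    have m2: "ak * inner (g k) (zeta k - lam k) \<ge> 0"
      using apos[of k] step2_choice[of k] by (simp add: ak_def)
    have lin: "inner (g k) (l - lam k) - inner (g k) (l - zeta k) = inner (g k) (zeta k - lam k)"
      by (simp add: inner_diff_right)
    have AS: "Acap (Suc k) = Ak + ak" by (simp add: step3_A Ak_def ak_def)
    have "Acap (Suc k) * phi (eta (Suc k)) - eps * Acap (Suc k) / 2 + (norm (l - zeta (Suc k)))\<^sup>2 / 2
        = (Ak + ak) * phi (lam k) - eps * Ak / 2 + (norm (l - zeta k))\<^sup>2 / 2 + ak * inner (g k) (l - zeta k)"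
      unfolding AS by (rule gen1[OF e3' nrm refl])
    also have "\<dots> \<le> Ak * phi (eta k) - eps * Ak / 2 + (norm (l - zeta k))\<^sup>2 / 2 + ak * (phi (lam k) + inner (g k) (l - lam k))"
      by (rule gen2[OF m1 m2 lin])
    also have "\<dots> \<le> (norm l)\<^sup>2 / 2 + (\<Sum>i<k. a (Suc i) * (phi (lam i) + inner (g i) (l - lam i))) + ak * (phi (lam k) + inner (g k) (l - lam k))"
      using Suc.IH by (simp add: Ak_def)
    finally show ?case by (simp add: ak_def)
  qed
  show ?thesis
  proof (intro allI impI)
    fix k :: nat assume "k \<ge> 1"
    then obtain j where kj: "k = Suc j" by (cases k) auto
    define Ak where "Ak = Acap k"
    have Ak: "Ak > 0" using Anonneg[of j] apos[of j] by (simp add: Ak_def kj step3_A)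
    have Aks: "Ak = (\<Sum>i<k. a (Suc i))" by (simp add: Ak_def Asum)
    have xh: "xhat k = (\<Sum>i<k. (a (Suc i) / Ak) *\<^sub>R xs i)"
      by (simp add: kj step5 Ak_def lessThan_Suc_atMost scaleR_sum_right)
    have wsum: "(\<Sum>i<k. a (Suc i) / Ak) = 1" using Ak by (simp add: Aks[symmetric] sum_divide_distrib[symmetric])
    have wnn: "\<And>i. i \<in> {..<k} \<Longrightarrow> a (Suc i) / Ak \<ge> 0" using apos Ak by (simp add: less_imp_le)
    have xQ: "xhat k \<in> Q"
      unfolding xh by (rule convex_sum[OF _ Q_convex wsum wnn]) (auto simp: xsQ)
    have jensen: "f (xhat k) \<le> (\<Sum>i<k. a (Suc i) / Ak * f (xs i))"
      unfolding xh by (rule convex_on_sum[OF _ _ f_convex wsum wnn]) (auto simp: xsQ kj)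
    have jensen2: "Ak * f (xhat k) \<le> (\<Sum>i<k. a (Suc i) * f (xs i))"
    proof -
      have "Ak * f (xhat k) \<le> Ak * (\<Sum>i<k. a (Suc i) / Ak * f (xs i))"
        using jensen Ak by simp
      also have "\<dots> = (\<Sum>i<k. a (Suc i) * f (xs i))"
        using Ak by (simp add: sum_distrib_left)
      finally show ?thesis .
    qed
    have Axh: "A (xhat k) = (\<Sum>i<k. (a (Suc i) / Ak) *\<^sub>R A (xs i))"
      unfolding xh using A_linear by (simp add: linear_sum linear_scale)
    define r where "r = A (xhat k) - b"
    have sumg: "(\<Sum>i<k. a (Suc i) *\<^sub>R g i) = - (Ak *\<^sub>R r)"
    proof -
      have "(\<Sum>i<k. a (Suc i) *\<^sub>R g i) = (\<Sum>i<k. a (Suc i) *\<^sub>R b) - (\<Sum>i<k. a (Suc i) *\<^sub>R A (xs i))"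
        by (simp add: step2_g scaleR_diff_right sum_subtractf)
      also have "(\<Sum>i<k. a (Suc i) *\<^sub>R b) = Ak *\<^sub>R b" by (simp add: Aks scaleR_sum_left)
      also have "(\<Sum>i<k. a (Suc i) *\<^sub>R A (xs i)) = Ak *\<^sub>R A (xhat k)"
        using Ak by (simp add: Axh scaleR_sum_right)
      finally show ?thesis by (simp add: r_def scaleR_diff_right)
    qed
    have rhs: "(\<Sum>i<k. a (Suc i) * (phi (lam i) + inner (g i) (l - lam i)))
        \<le> - Ak * inner l r - Ak * f (xhat k)" for l
    proof -
      have "phi (lam i) + inner (g i) (l - lam i) = inner l (g i) - f (xs i)" for i
        using phiE[OF step2_x[of i]] step2_g[of i]
        by (simp add: inner_diff_left inner_diff_right inner_commute)
      then have "(\<Sum>i<k. a (Suc i) * (phi (lam i) + inner (g i) (l - lam i)))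
          = inner l (\<Sum>i<k. a (Suc i) *\<^sub>R g i) - (\<Sum>i<k. a (Suc i) * f (xs i))"
        by (simp add: inner_sum_right right_diff_distrib sum_subtractf)
      also have "\<dots> = - Ak * inner l r - (\<Sum>i<k. a (Suc i) * f (xs i))" by (simp add: sumg)
      finally show ?thesis using jensen2 by simp
    qed
    have key: "Ak * phi (eta k) - eps * Ak / 2 \<le> (norm l)\<^sup>2 / 2 - Ak * inner l r - Ak * f (xhat k)" for l
      using inv[of k l] rhs[of l] zero_le_power2[of "norm (l - zeta k)"] unfolding Ak_def by linarith
    have up0: "Ak * (phi (eta k) + f (xhat k)) \<le> 2 * R\<^sup>2 - 2 * R * Ak * norm r + eps * Ak / 2"
    proof (cases "r = 0")
      case True
      have "R\<^sup>2 \<ge> 0" by simp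
      moreover have "Ak * phi (eta k) - eps * Ak / 2 \<le> - Ak * f (xhat k)" using key[of 0] by simp
      moreover have "Ak * (phi (eta k) + f (xhat k)) = Ak * phi (eta k) + Ak * f (xhat k)" by (simp add: algebra_simps)
      moreover have "2 * R * Ak * norm r = 0" using True by simp
      ultimately show ?thesis by linarith
    next
      case False
      define l where "l = (2 * R / norm r) *\<^sub>R r"
      have "(norm l)\<^sup>2 = 4 * R\<^sup>2" using False R_pos by (simp add: l_def power2_eq_square)
      moreover have "inner l r = 2 * R * norm r"
        using False by (simp add: l_def power2_norm_eq_inner[symmetric] power2_eq_square)
      ultimately show ?thesis using key[of l] by (simp add: algebra_simps)
    qed
    have up: "phi (eta k) + f (xhat k) \<le> 2 * R\<^sup>2 / Ak - 2 * R * norm r + eps / 2"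
    proof -
      have "phi (eta k) + f (xhat k) \<le> (2 * R\<^sup>2 - 2 * R * Ak * norm r + eps * Ak / 2) / Ak"
        using up0 Ak by (simp add: field_simps)
      also have "\<dots> = 2 * R\<^sup>2 / Ak - 2 * R * norm r + eps / 2" using Ak by (simp add: field_simps)
      finally show ?thesis .
    qed
    obtain xst where xst: "is_dual_maximizer f Q A lamstar xst" using max_attained by blast
    have lo: "phi (eta k) + f (xhat k) \<ge> - R * norm r"
    proof -
      have "inner lamstar b - f (xhat k) - inner lamstar (A (xhat k)) \<le> phi lamstar"
        by (rule phiL[OF xst xQ])
      also have "\<dots> \<le> phi (eta k)" by (rule lamstar_opt)
      finally have "- inner lamstar r \<le> phi (eta k) + f (xhat k)"
        by (simp add: r_def inner_diff_right)
      moreover have "inner lamstar r \<le> R * norm r"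
        using norm_cauchy_schwarz[of lamstar r] lamstar_bound
        by (meson mult_right_mono norm_ge_zero order_trans)
      ultimately show ?thesis by simp
    qed
    have nr: "R * norm r \<le> 2 * R\<^sup>2 / Ak + eps / 2" using up lo by simp
    have nr2: "norm r \<le> 2 * R / Ak + eps / (2 * R)"
    proof -
      have "norm r \<le> (2 * R\<^sup>2 / Ak + eps / 2) / R" using nr R_pos by (simp add: field_simps)
      also have "\<dots> = 2 * R / Ak + eps / (2 * R)" using R_pos Ak by (simp add: field_simps power2_eq_square)
      finally show ?thesis .
    qed
    have absb: "\<bar>phi (eta k) + f (xhat k)\<bar> \<le> 2 * R\<^sup>2 / Ak + eps / 2"
    proof -
      have "R * norm r \<ge> 0" using R_pos by simp
      then show ?thesis using up lo nr unfolding abs_le_iff by linarith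
    qed
    have Abound: "Acap k \<ge> c_nu nu * (real k powr ((1 + 3 * nu) / (1 + nu)) * eps powr ((1 - nu) / (1 + nu)))
                 / (2 powr ((1 + 3 * nu) / (1 + nu)) * M powr (2 / (1 + nu)))"
      by (rule final_bound[OF nu_range Mpos eps_pos Anonneg]) (use ind in \<open>simp add: gm_def K_def\<close>)
    show "xhat k \<in> Q
      \<and> norm (A (xhat k) - b) \<le> 2 * R / Acap k + eps / (2 * R)
      \<and> \<bar>phi (eta k) + f (xhat k)\<bar> \<le> 2 * R\<^sup>2 / Acap k + eps / 2
      \<and> Acap k \<ge> c_nu nu * (real k powr ((1 + 3 * nu) / (1 + nu)) * eps powr ((1 - nu) / (1 + nu)))
                 / (2 powr ((1 + 3 * nu) / (1 + nu)) * M powr (2 / (1 + nu)))"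
      using xQ nr2 absb Abound by (simp add: Ak_def r_def)
  qed
qed


end
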